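(* Let $A_0\in\mathbb{R}^{n\times n}$, $B\in\mathbb{R}^{n\times m}$, $K\in\mathbb{R}^{m\times n}$, $P_0\in\mathbb{R}^{n\times n}$ symmetric, $H\in\mathbb{R}^{m\times m}$ diagonal, and $V(x)=\tfrac12\big(x^\top P_0x+x^\top K^\top HKx-\mathrm{dz}(Kx)^\top H\,\mathrm{dz}(Kx)\big)$. Suppose there is a diagonal $M\succeq0$ with $P_0B-A_0^\top K^\top H=K^\top M$ and $2M+\Omega\succ0$, where $\Omega:=HKB+B^\top K^\top H$. Then, with $S_0:=-(P_0A_0+A_0^\top P_0)$, the directional derivative of $V$ along $\dot x=A_0x-B\,\mathrm{sat}(Kx)$ satisfies, for almost all $x\in\mathbb{R}^n$, $$\dot V(x)=-\tfrac12\begin{bmatrix}x\\ \mathrm{dz}(Kx)\end{bmatrix}^\top Q\begin{bmatrix}x\\ \mathrm{dz}(Kx)\end{bmatrix},\quad Q=\begin{bmatrix}S_0+K^\top(2M+\Omega)K&-K^\top(M+\Omega)\\ -(M+\Omega)K&\Omega\end{bmatrix}.$$ Moreover, if $P_0\succeq0$ and $P_0A_0+A_0^\top P_0\preceq0$, then there exist a diagonal $T_0\succeq0$ and a symmetric $R\succ0$ with $\tfrac12Q-\Sigma_0-\Sigma_R\succeq0$; in particular $-\dot V(x)\ge\lambda_{\min}(R)|\mathrm{sat}(Kx)|^2$ for almost all $x$.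
   Context: Decentralized saturation $\mathrm{sat}(u)_i=\min\{\overline{u}_i,\max\{-\underline{u}_i,u_i\}\}$ with $\overline{u}_i,\underline{u}_i>0$; $\mathrm{dz}(u)=u-\mathrm{sat}(u)$. $\Sigma_0=\begin{bmatrix}0&K^\top T_0\\ T_0K&-2T_0\end{bmatrix}$, $\Sigma_R=\begin{bmatrix}K^\top RK&-K^\top R\\ -RK&R\end{bmatrix}$. *)

theory Defs
  imports "HOL-Analysis.Analysis"
begin

definition sat :: "real^'m \<Rightarrow> real^'m \<Rightarrow> real^'m \<Rightarrow> real^'m" where
  "sat ub lb u = (\<chi> i. min (ub $ i) (max (- (lb $ i)) (u $ i)))"

definition dz :: "real^'m \<Rightarrow> real^'m \<Rightarrow> real^'m \<Rightarrow> real^'m" where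
  "dz ub lb u = u - sat ub lb u"

definition diag_mat :: "real^'m^'m \<Rightarrow> bool" where
  "diag_mat H \<longleftrightarrow> (\<forall>i j. i \<noteq> j \<longrightarrow> H $ i $ j = 0)"

definition psd_mat :: "real^'n^'n \<Rightarrow> bool" where
  "psd_mat A \<longleftrightarrow> transpose A = A \<and> (\<forall>x. x \<bullet> (A *v x) \<ge> 0)"

definition pd_mat :: "real^'n^'n \<Rightarrow> bool" where
  "pd_mat A \<longleftrightarrow> transpose A = A \<and> (\<forall>x. x \<noteq> 0 \<longrightarrow> x \<bullet> (A *v x) > 0)"

definition lambda_min :: "real^'n^'n \<Rightarrow> real" where
  "lambda_min A = Min {l. \<exists>v. v \<noteq> 0 \<and> A *v v = l *\<^sub>R v}"

definition block_vec :: "real^'n \<Rightarrow> real^'m \<Rightarrow> real^('n + 'm)" where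
  "block_vec x w = (\<chi> i. case i of Inl j \<Rightarrow> x $ j | Inr j \<Rightarrow> w $ j)"

definition block_mat :: "real^'n^'n \<Rightarrow> real^'m^'n \<Rightarrow> real^'n^'m \<Rightarrow> real^'m^'m
    \<Rightarrow> real^('n + 'm)^('n + 'm)" where
  "block_mat A B C D = (\<chi> i k. case i of
       Inl i' \<Rightarrow> (case k of Inl k' \<Rightarrow> A $ i' $ k' | Inr k' \<Rightarrow> B $ i' $ k')
     | Inr i' \<Rightarrow> (case k of Inl k' \<Rightarrow> C $ i' $ k' | Inr k' \<Rightarrow> D $ i' $ k'))"

definition Sigma0 :: "real^'n^'m \<Rightarrow> real^'m^'m \<Rightarrow> real^('n + 'm)^('n + 'm)" where
  "Sigma0 K T0 = block_mat 0 (transpose K ** T0) (T0 ** K) (- (2 *\<^sub>R T0))"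

definition SigmaR :: "real^'n^'m \<Rightarrow> real^'m^'m \<Rightarrow> real^('n + 'm)^('n + 'm)" where
  "SigmaR K R = block_mat (transpose K ** R ** K) (- (transpose K ** R)) (- (R ** K)) R"

definition Omega_mat :: "real^'m^'m \<Rightarrow> real^'n^'m \<Rightarrow> real^'m^'n \<Rightarrow> real^'m^'m" where
  "Omega_mat H K B = H ** K ** B + transpose B ** transpose K ** H"

definition S0_mat :: "real^'n^'n \<Rightarrow> real^'n^'n \<Rightarrow> real^'n^'n" where
  "S0_mat P0 A0 = - (P0 ** A0 + transpose A0 ** P0)"

definition Q_mat :: "real^'n^'n \<Rightarrow> real^'n^'n \<Rightarrow> real^'m^'n \<Rightarrow> real^'n^'m
    \<Rightarrow> real^'m^'m \<Rightarrow> real^'m^'m \<Rightarrow> real^('n + 'm)^('n + 'm)" where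
  "Q_mat P0 A0 B K H M =
     block_mat (S0_mat P0 A0 + transpose K ** (2 *\<^sub>R M + Omega_mat H K B) ** K)
       (- (transpose K ** (M + Omega_mat H K B)))
       (- ((M + Omega_mat H K B) ** K))
       (Omega_mat H K B)"

end

theory Submission
  imports Defs
begin


lemma clamp_bound:
  fixes a b y h :: real
  assumes "-b \<le> a"
  defines "c \<equiv> (\<lambda>u. min a (max (-b) u))"
  shows "\<bar>((y+h)^2 - ((y+h) - c (y+h))^2) - (y^2 - (y - c y)^2) - 2 * c y * h\<bar> \<le> 2 * h^2"
proof -
  define a' where "a' = c (y+h) - c y"
  have E: "((y+h)^2 - ((y+h) - c (y+h))^2) - (y^2 - (y - c y)^2) - 2 * c y * h
     = 2 * (a' * (y+h - c (y+h))) + a'^2"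
    unfolding a'_def by (simp add: power2_eq_square algebra_simps)
  have E2: "((y+h)^2 - ((y+h) - c (y+h))^2) - (y^2 - (y - c y)^2) - 2 * c y * h
     = 2 * (a' * h) + 2 * (a' * (y - c y)) - a'^2"
    unfolding a'_def by (simp add: power2_eq_square algebra_simps)
  have p1: "a' * (y+h - c (y+h)) \<ge> 0"
    unfolding a'_def c_def using assms(1) by (auto simp: min_def max_def intro: mult_nonneg_nonneg mult_nonpos_nonpos)
  have p2: "a' * (y - c y) \<le> 0"
    unfolding a'_def c_def using assms(1) by (auto simp: min_def max_def intro: mult_nonneg_nonpos mult_nonpos_nonneg)
  have ah: "\<bar>a'\<bar> \<le> \<bar>h\<bar>"
    unfolding a'_def c_def using assms(1) by (auto simp: min_def max_def)
  have "a' * h \<le> h^2"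
  proof -
    have "a' * h \<le> \<bar>a'\<bar> * \<bar>h\<bar>" by (metis abs_ge_self abs_mult)
    also have "\<dots> \<le> \<bar>h\<bar> * \<bar>h\<bar>" by (rule mult_right_mono[OF ah]) simp
    finally show ?thesis by (simp add: power2_eq_square)
  qed
  moreover have "a'^2 \<ge> 0" by simp
  ultimately show ?thesis using E E2 p1 p2 by (smt (verit))
qed



lemma g_deriv:
  fixes a b y :: real
  assumes "-b \<le> a"
  shows "((\<lambda>u. u^2 - (u - min a (max (-b) u))^2) has_real_derivative 2 * min a (max (-b) y)) (at y)"
proof -
  define g where "g = (\<lambda>u::real. u^2 - (u - min a (max (-b) u))^2)"
  define D where "D = 2 * min a (max (-b) y)"
  have "((\<lambda>z. (g z - g y) / (z - y) - D) \<longlongrightarrow> 0) (at y)"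
  proof (rule Lim_null_comparison)
    show "\<forall>\<^sub>F z in at y. norm ((g z - g y) / (z - y) - D) \<le> 2 * \<bar>z - y\<bar>"
    proof (rule eventually_at_topological[THEN iffD2], intro exI[of _ UNIV] conjI ballI impI)
      fix z assume "z \<noteq> y"
      have b: "\<bar>g (y + (z-y)) - g y - D * (z-y)\<bar> \<le> 2 * (z-y)^2"
        using clamp_bound[OF assms, of y "z-y"] unfolding g_def D_def by (simp add: mult.assoc mult.commute)
      have "(g z - g y) / (z - y) - D = (g (y + (z-y)) - g y - D * (z-y)) / (z - y)"
        using \<open>z \<noteq> y\<close> by (simp add: field_simps)
      hence "norm ((g z - g y) / (z - y) - D) = \<bar>g (y + (z-y)) - g y - D * (z-y)\<bar> / \<bar>z - y\<bar>"
        by (simp add: abs_divide)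
      also have "\<dots> \<le> 2 * (z-y)^2 / \<bar>z - y\<bar>"
        using b by (simp add: divide_right_mono)
      also have "\<dots> = 2 * \<bar>z - y\<bar>"
      proof -
        have "(z-y)^2 = \<bar>z-y\<bar> * \<bar>z-y\<bar>" by (metis abs_mult_self_eq power2_eq_square)
        show ?thesis using \<open>z \<noteq> y\<close> by (cases "z > y") (auto simp: power2_eq_square field_simps)
      qed
      finally show "norm ((g z - g y) / (z - y) - D) \<le> 2 * \<bar>z - y\<bar>" .
    qed auto
    show "((\<lambda>z. 2 * \<bar>z - y\<bar>) \<longlongrightarrow> 0) (at y)"
    proof -
      have "((\<lambda>z. 2 * \<bar>z - y\<bar>) \<longlongrightarrow> 2 * \<bar>y - y\<bar>) (at y)"
        by (intro tendsto_intros)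
      thus ?thesis by simp
    qed
  qed
  hence "((\<lambda>z. (g z - g y) / (z - y)) \<longlongrightarrow> D) (at y)"
    by (simp add: LIM_zero_iff)
  thus ?thesis unfolding g_def D_def has_field_derivative_iff by simp
qed



lemma inner_tr: "(u::real^'n) \<bullet> (transpose A *v w) = (A *v u) \<bullet> (w::real^'m)"
  by (metis dot_lmul_matrix inner_commute transpose_matrix_vector)

lemma diag_mv: "diag_mat H \<Longrightarrow> (H *v w) $ i = H$i$i * w$i"
proof -
  assume h: "diag_mat H"
  have "(H *v w) $ i = (\<Sum>j\<in>UNIV. H$i$j * w$j)" by (simp add: matrix_vector_mult_def)
  also have "\<dots> = (\<Sum>j\<in>UNIV. if j = i then H$i$i * w$i else 0)"
    by (rule sum.cong) (use h in \<open>auto simp: diag_mat_def\<close>)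
  also have "\<dots> = H$i$i * w$i" by simp
  finally show ?thesis .
qed

lemma diag_inner: "diag_mat H \<Longrightarrow> (u::real^'m) \<bullet> (H *v w) = (\<Sum>i\<in>UNIV. H$i$i * u$i * w$i)"
  by (simp add: inner_vec_def diag_mv mult_ac)

lemma diag_transpose: "diag_mat H \<Longrightarrow> transpose H = H"
  by (auto simp: diag_mat_def transpose_def vec_eq_iff) metis

definition GG :: "real \<Rightarrow> real \<Rightarrow> real \<Rightarrow> real" where
  "GG a b u = u^2 - (u - min a (max (-b) u))^2"

lemma V_alt:
  assumes "diag_mat H"
  shows "1/2 * (x \<bullet> (P0 *v x) + (K *v x) \<bullet> (H *v (K *v x))
                 - dz ub lb (K *v x) \<bullet> (H *v dz ub lb (K *v x)))
    = 1/2 * (x \<bullet> (P0 *v x) + (\<Sum>i\<in>UNIV. H$i$i * GG (ub$i) (lb$i) ((K *v x)$i)))"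
proof -
  have "(K *v x) \<bullet> (H *v (K *v x)) - dz ub lb (K *v x) \<bullet> (H *v dz ub lb (K *v x))
      = (\<Sum>i\<in>UNIV. H$i$i * GG (ub$i) (lb$i) ((K *v x)$i))"
    unfolding diag_inner[OF assms] sum_subtractf[symmetric]
    by (rule sum.cong) (auto simp: GG_def dz_def sat_def power2_eq_square algebra_simps)
  thus ?thesis by simp
qed

lemma V_deriv:
  fixes P0 :: "real^'n^'n" and K :: "real^'n^'m" and H :: "real^'m^'m"
  assumes H: "diag_mat H" and P0: "transpose P0 = P0"
    and ub: "\<forall>i. ub $ i > 0" and lb: "\<forall>i. lb $ i > 0"
  shows "((\<lambda>t. 1/2 * ((x + t *\<^sub>R v) \<bullet> (P0 *v (x + t *\<^sub>R v)) + (K *v (x + t *\<^sub>R v)) \<bullet> (H *v (K *v (x + t *\<^sub>R v)))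
                 - dz ub lb (K *v (x + t *\<^sub>R v)) \<bullet> (H *v dz ub lb (K *v (x + t *\<^sub>R v)))))
     has_real_derivative (x \<bullet> (P0 *v v) + sat ub lb (K *v x) \<bullet> (H *v (K *v v)))) (at 0)"
proof -
  define c where "c i = 2 * min (ub$i) (max (-(lb$i)) ((K *v x)$i))" for i
  have fe: "(\<lambda>t. 1/2 * ((x + t *\<^sub>R v) \<bullet> (P0 *v (x + t *\<^sub>R v)) + (K *v (x + t *\<^sub>R v)) \<bullet> (H *v (K *v (x + t *\<^sub>R v)))
                 - dz ub lb (K *v (x + t *\<^sub>R v)) \<bullet> (H *v dz ub lb (K *v (x + t *\<^sub>R v)))))
     = (\<lambda>t. 1/2 * ((x \<bullet> (P0 *v x) + t * (x \<bullet> (P0 *v v)) + t * (v \<bullet> (P0 *v x)) + t^2 * (v \<bullet> (P0 *v v)))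
          + (\<Sum>i\<in>UNIV. H$i$i * GG (ub$i) (lb$i) ((K *v x)$i + t * (K *v v)$i))))"
    apply (rule ext)
    apply (subst V_alt[OF H])
    apply (simp add: matrix_vector_right_distrib matrix_vector_mult_scaleR inner_add_left inner_add_right
        power2_eq_square algebra_simps)
    done
  have dG: "((\<lambda>t. GG (ub$i) (lb$i) ((K *v x)$i + t * (K *v v)$i)) has_real_derivative c i * (K *v v)$i) (at 0)" for i
  proof -
    have "-(lb$i) \<le> ub$i" using ub lb by (smt (verit))
    from g_deriv[OF this, of "(K *v x)$i + 0 * (K *v v)$i"]
    have a: "(GG (ub$i) (lb$i) has_real_derivative c i) (at ((K *v x)$i + 0 * (K *v v)$i))"
      unfolding GG_def c_def by simp
    have b: "((\<lambda>t. (K *v x)$i + t * (K *v v)$i) has_real_derivative (K *v v)$i) (at 0)"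
      by (auto intro!: derivative_eq_intros)
    show ?thesis using DERIV_chain2[OF a b] by simp
  qed
  have DD: "((\<lambda>t. 1/2 * ((x \<bullet> (P0 *v x) + t * (x \<bullet> (P0 *v v)) + t * (v \<bullet> (P0 *v x)) + t^2 * (v \<bullet> (P0 *v v)))
          + (\<Sum>i\<in>UNIV. H$i$i * GG (ub$i) (lb$i) ((K *v x)$i + t * (K *v v)$i))))
      has_real_derivative 1/2 * ((0 + (x \<bullet> (P0 *v v)) + (v \<bullet> (P0 *v x)) + (2 * 0) * (v \<bullet> (P0 *v v)))
          + (\<Sum>i\<in>UNIV. H$i$i * (c i * (K *v v)$i)))) (at 0)"
    apply (intro DERIV_cmult DERIV_add DERIV_sum dG)
    apply (auto intro!: derivative_eq_intros)
    done
  have s1: "v \<bullet> (P0 *v x) = x \<bullet> (P0 *v v)"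
    using inner_tr[of v P0 x] P0 by (simp add: inner_commute)
  have s2: "sat ub lb (K *v x) \<bullet> (H *v (K *v v)) = (\<Sum>i\<in>UNIV. H$i$i * (c i * (K *v v)$i)) / 2"
    unfolding diag_inner[OF H] c_def sat_def by (simp add: sum_divide_distrib mult_ac)
  have eqD: "x \<bullet> (P0 *v v) + sat ub lb (K *v x) \<bullet> (H *v (K *v v)) = 1/2 * ((0 + (x \<bullet> (P0 *v v)) + (v \<bullet> (P0 *v x)) + (2 * 0) * (v \<bullet> (P0 *v v)))
          + (\<Sum>i\<in>UNIV. H$i$i * (c i * (K *v v)$i)))"
    unfolding s1 s2 by simp
  show ?thesis unfolding fe eqD by (rule DD)
qed



lemma sum_UNIV_plus: "(\<Sum>i\<in>(UNIV::('a::finite + 'b::finite) set). g i) = (\<Sum>j\<in>UNIV. g (Inl j)) + (\<Sum>j\<in>UNIV. g (Inr j))"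
  by (subst UNIV_Plus_UNIV[symmetric], subst sum.Plus) (simp_all add: comp_def)

lemma block_inner: "block_vec x d \<bullet> block_vec x' d' = x \<bullet> x' + d \<bullet> d'"
  by (simp add: inner_vec_def sum_UNIV_plus block_vec_def)

lemma block_mv: "block_mat A B C D *v block_vec x d = block_vec (A *v x + B *v d) (C *v x + D *v d)"
  by (simp add: vec_eq_iff block_mat_def block_vec_def matrix_vector_mult_def sum_UNIV_plus split: sum.splits)

lemma block_form: "block_vec x d \<bullet> (block_mat A B C D *v block_vec x d)
    = x \<bullet> (A *v x) + x \<bullet> (B *v d) + d \<bullet> (C *v x) + d \<bullet> (D *v d)"
  by (simp add: block_mv block_inner inner_add_right)

lemma block_surj: "z = block_vec (\<chi> j. z $ Inl j) (\<chi> j. z $ Inr j)"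
  by (simp add: vec_eq_iff block_vec_def split: sum.splits)

lemma uminus_mv: "(- A) *v (x::real^'n) = - (A *v x)"
  by (simp add: matrix_vector_mult_def vec_eq_iff sum_negf)

lemma scaleR_mv: "(c *\<^sub>R A) *v (x::real^'n) = c *\<^sub>R (A *v x)"
  by (simp add: scaleR_matrix_vector_assoc)

lemmas mvs = matrix_vector_mult_add_rdistrib matrix_vector_mult_diff_rdistrib uminus_mv scaleR_mv
  matrix_vector_mul_assoc[symmetric] matrix_vector_right_distrib matrix_vector_mult_diff_distrib
  matrix_vector_mult_scaleR inner_add_right inner_add_left inner_diff_right inner_diff_left
  inner_minus_right inner_minus_left inner_scaleR_right inner_scaleR_left

lemma L3:
  fixes A0 P0 :: "real^'n^'n" and B :: "real^'m^'n" and K :: "real^'n^'m"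
    and H M :: "real^'m^'m" and s :: "real^'m"
  assumes H: "diag_mat H"
    and eq: "P0 ** B - transpose A0 ** transpose K ** H = transpose K ** M"
  shows "x \<bullet> (P0 *v (A0 *v x - B *v s)) + s \<bullet> (H *v (K *v (A0 *v x - B *v s)))
       = x \<bullet> (P0 *v (A0 *v x)) - (K *v x) \<bullet> (M *v s) - s \<bullet> (H *v (K *v (B *v s)))"
proof -
  have PB: "P0 ** B = transpose A0 ** transpose K ** H + transpose K ** M"
    using eq by (simp add: algebra_simps)
  have "x \<bullet> (P0 *v (B *v s)) = x \<bullet> ((P0 ** B) *v s)" by (simp add: matrix_vector_mul_assoc)
  also have "\<dots> = x \<bullet> (transpose A0 *v (transpose K *v (H *v s))) + x \<bullet> (transpose K *v (M *v s))"
    unfolding PB by (simp add: mvs)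
  also have "\<dots> = (K *v (A0 *v x)) \<bullet> (H *v s) + (K *v x) \<bullet> (M *v s)"
    by (simp only: inner_tr)
  finally have a: "x \<bullet> (P0 *v (B *v s)) = (K *v (A0 *v x)) \<bullet> (H *v s) + (K *v x) \<bullet> (M *v s)" .
  have b: "s \<bullet> (H *v (K *v (A0 *v x))) = (K *v (A0 *v x)) \<bullet> (H *v s)"
    using inner_tr[of s H "K *v (A0 *v x)"] diag_transpose[OF H] by (simp add: inner_commute)
  show ?thesis
    using a b by (simp add: matrix_vector_mult_diff_distrib inner_diff_right)
qed

lemma L4:
  fixes Az P0 :: "real^'n^'n" and B :: "real^'m^'n" and K :: "real^'n^'m"
    and H M :: "real^'m^'m" and d :: "real^'m"
  assumes H: "diag_mat H" and P0: "transpose P0 = P0" and Msym: "transpose M = M"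
  shows "x \<bullet> (P0 *v (Az *v x)) - (K *v x) \<bullet> (M *v (K *v x - d)) - (K *v x - d) \<bullet> (H *v (K *v (B *v (K *v x - d))))
     = - 1/2 * (block_vec x d \<bullet> (Q_mat P0 Az B K H M *v block_vec x d))"
proof -
  define y where "y = K *v x"
  define a where "a = x \<bullet> (P0 *v (Az *v x))"
  define m where "m u w = u \<bullet> (M *v w)" for u w :: "real^'m"
  define h where "h u w = u \<bullet> (H *v (K *v (B *v w)))" for u w :: "real^'m"
  have msym: "m u w = m w u" for u w
    unfolding m_def using inner_tr[of u M w] Msym by (simp add: inner_commute)
  have Om: "u \<bullet> (Omega_mat H K B *v w) = h u w + h w u" for u w
  proof -
    have "u \<bullet> ((transpose B ** transpose K ** H) *v w) = u \<bullet> (transpose B *v (transpose K *v (H *v w)))"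
      by (simp only: matrix_vector_mul_assoc[symmetric])
    also have "\<dots> = (K *v (B *v u)) \<bullet> (H *v w)" by (simp only: inner_tr)
    also have "\<dots> = w \<bullet> (H *v (K *v (B *v u)))"
      using inner_tr[of w H "K *v (B *v u)"] diag_transpose[OF H] by (simp add: inner_commute)
    finally show ?thesis unfolding Omega_mat_def h_def
      by (simp only: matrix_vector_mult_add_rdistrib inner_add_right matrix_vector_mul_assoc[symmetric])
  qed
  have S0: "x \<bullet> (S0_mat P0 Az *v x) = - 2 * a"
  proof -
    have "x \<bullet> (transpose Az *v (P0 *v x)) = (Az *v x) \<bullet> (P0 *v x)" by (simp only: inner_tr)
    also have "\<dots> = a" unfolding a_def
      using inner_tr[of x P0 "Az *v x"] P0 by (simp add: inner_commute)
    finally show ?thesis unfolding S0_mat_def a_def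
      by (simp add: mvs del: transpose_matrix_vector)
  qed
  have KW: "x \<bullet> ((transpose K ** W ** K) *v x) = y \<bullet> (W *v y)" for W
    unfolding y_def by (simp add: matrix_vector_mul_assoc[symmetric] inner_tr del: transpose_matrix_vector)
  have KW2: "x \<bullet> ((transpose K ** W) *v d) = y \<bullet> (W *v d)" for W
    unfolding y_def by (simp add: matrix_vector_mul_assoc[symmetric] inner_tr del: transpose_matrix_vector)
  have KW3: "d \<bullet> ((W ** K) *v x) = d \<bullet> (W *v y)" for W
    unfolding y_def by (simp add: matrix_vector_mul_assoc[symmetric])
  have Q: "block_vec x d \<bullet> (Q_mat P0 Az B K H M *v block_vec x d)
     = -2 * a + (2 * m y y + (h y y + h y y)) - (m y d + (h y d + h d y)) - (m d y + (h d y + h y d)) + (h d d + h d d)"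
    unfolding Q_mat_def block_form
    by (simp add: inner_add_right uminus_mv matrix_vector_mult_add_rdistrib S0 KW KW2 KW3
        scaleR_mv Om m_def[symmetric] del: transpose_matrix_vector)
  have L: "x \<bullet> (P0 *v (Az *v x)) - (K *v x) \<bullet> (M *v (K *v x - d)) - (K *v x - d) \<bullet> (H *v (K *v (B *v (K *v x - d))))
     = a - (m y y - m y d) - (h y y - h y d - h d y + h d d)"
    unfolding a_def m_def h_def y_def
    by (simp add: matrix_vector_mult_diff_distrib inner_diff_left inner_diff_right)
  show ?thesis unfolding L Q using msym[of y d] by (simp add: algebra_simps)
qed



lemma pd_bound:
  fixes W :: "real^'m^'m"
  assumes "pd_mat W"
  shows "\<exists>m>0. \<forall>u. u \<bullet> (W *v u) \<ge> m * (u \<bullet> u)"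
proof -
  have "\<exists>u0\<in>sphere 0 1. \<forall>u\<in>sphere 0 1. u0 \<bullet> (W *v u0) \<le> u \<bullet> (W *v u)"
  proof (rule continuous_attains_inf)
    show "compact (sphere (0::real^'m) 1)" by simp
    show "sphere (0::real^'m) 1 \<noteq> {}"
      unfolding sphere_def by (simp, metis norm_axis_1)
    show "continuous_on (sphere 0 1) (\<lambda>u::real^'m. u \<bullet> (W *v u))"
      by (intro continuous_intros)
  qed
  then obtain u0 where u0: "norm u0 = 1" and min: "\<And>u. norm u = 1 \<Longrightarrow> u0 \<bullet> (W *v u0) \<le> u \<bullet> (W *v u)"
    by (auto simp: sphere_def)
  define m where "m = u0 \<bullet> (W *v u0)"
  have "u0 \<noteq> 0" using u0 by auto
  hence mpos: "m > 0" using assms unfolding pd_mat_def m_def by auto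
  have "u \<bullet> (W *v u) \<ge> m * (u \<bullet> u)" for u
  proof (cases "u = 0")
    case True thus ?thesis by simp
  next
    case False
    define u' where "u' = (1 / norm u) *\<^sub>R u"
    have nu: "norm u' = 1" using False by (simp add: u'_def)
    have uu: "u = norm u *\<^sub>R u'" using False by (simp add: u'_def)
    have "u \<bullet> (W *v u) = (norm u)^2 * (u' \<bullet> (W *v u'))"
      by (subst (1 2) uu) (simp add: matrix_vector_mult_scaleR power2_eq_square)
    moreover have "u \<bullet> u = (norm u)^2" by (simp add: power2_norm_eq_inner)
    moreover have "m \<le> u' \<bullet> (W *v u')" using min[OF nu] by (simp add: m_def)
    ultimately show ?thesis by (metis mult.commute mult_right_mono zero_le_power2)
  qed
  thus ?thesis using mpos by blast
qed

lemma diag_psd_nonneg: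
  assumes "diag_mat M" "psd_mat M"
  shows "M$i$i \<ge> 0"
proof -
  have "axis i (1::real) \<bullet> (M *v axis i 1) \<ge> 0" using assms(2) by (simp add: psd_mat_def)
  also have "axis i (1::real) \<bullet> (M *v axis i 1) = M$i$i"
    unfolding diag_inner[OF assms(1)]
  proof -
    have "(\<Sum>ia\<in>UNIV. M $ ia $ ia * axis i (1::real) $ ia * axis i 1 $ ia) = (\<Sum>ia\<in>UNIV. if ia = i then M$i$i else 0)"
      by (rule sum.cong) (auto simp: axis_def)
    thus "(\<Sum>ia\<in>UNIV. M $ ia $ ia * axis i (1::real) $ ia * axis i 1 $ ia) = M$i$i" by simp
  qed
  finally show ?thesis .
qed

lemma dz_sat_nonneg:
  fixes M :: "real^'m^'m"
  assumes "diag_mat M" "psd_mat M" and ub: "\<forall>i. ub $ i > 0" and lb: "\<forall>i. lb $ i > 0"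
  shows "dz ub lb y \<bullet> (M *v sat ub lb y) \<ge> 0"
  unfolding diag_inner[OF assms(1)]
proof (rule sum_nonneg)
  fix i
  have "(dz ub lb y)$i * (sat ub lb y)$i \<ge> 0"
    using ub[rule_format, of i] lb[rule_format, of i]
    by (auto simp: dz_def sat_def min_def max_def zero_le_mult_iff mult_le_0_iff)
  thus "0 \<le> M $ i $ i * dz ub lb y $ i * sat ub lb y $ i"
    using diag_psd_nonneg[OF assms(1,2)] by (simp add: mult.assoc)
qed

lemma transpose_diff: "transpose (A - B) = transpose A - transpose (B::real^'n^'m)"
  by (simp add: transpose_def vec_eq_iff)
lemma transpose_add: "transpose (A + B) = transpose A + transpose (B::real^'n^'m)"
  by (simp add: transpose_def vec_eq_iff)
lemma transpose_uminus: "transpose (- A) = - transpose (A::real^'n^'m)"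
  by (simp add: transpose_def vec_eq_iff)
lemma transpose_zero: "transpose (0::real^'n^'m) = 0"
  by (simp add: transpose_def vec_eq_iff)
lemma block_transpose: "transpose (block_mat A B C D) = block_mat (transpose A) (transpose C) (transpose B) (transpose D)"
  by (simp add: transpose_def block_mat_def vec_eq_iff split: sum.splits)
lemma block_scale: "c *\<^sub>R block_mat A B C D = block_mat (c *\<^sub>R A) (c *\<^sub>R B) (c *\<^sub>R C) (c *\<^sub>R D)"
  by (simp add: block_mat_def vec_eq_iff split: sum.splits)
lemma block_diff: "block_mat A B C D - block_mat A' B' C' D' = block_mat (A - A') (B - B') (C - C') (D - D')"
  by (simp add: block_mat_def vec_eq_iff split: sum.splits)



lemma Omega_sym: "diag_mat H \<Longrightarrow> transpose (Omega_mat H K B) = Omega_mat H K B"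
  unfolding Omega_mat_def
  by (simp add: transpose_add matrix_transpose_mul diag_transpose matrix_mul_assoc add.commute)

lemma Om_form: "diag_mat H \<Longrightarrow> u \<bullet> (Omega_mat H K B *v w) = u \<bullet> (H *v (K *v (B *v w))) + w \<bullet> (H *v (K *v (B *v u)))"
proof -
  assume H: "diag_mat H"
  have "u \<bullet> ((transpose B ** transpose K ** H) *v w) = u \<bullet> (transpose B *v (transpose K *v (H *v w)))"
    by (simp only: matrix_vector_mul_assoc[symmetric])
  also have "\<dots> = (K *v (B *v u)) \<bullet> (H *v w)" by (simp only: inner_tr)
  also have "\<dots> = w \<bullet> (H *v (K *v (B *v u)))"
    using inner_tr[of w H "K *v (B *v u)"] diag_transpose[OF H] by (simp add: inner_commute)
  finally show ?thesis unfolding Omega_mat_def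
    by (simp only: matrix_vector_mult_add_rdistrib inner_add_right matrix_vector_mul_assoc[symmetric])
qed

lemma G_psd:
  fixes A0 P0 :: "real^'n^'n" and B :: "real^'m^'n" and K :: "real^'n^'m"
    and H M :: "real^'m^'m"
  assumes H: "diag_mat H" and S0: "psd_mat (S0_mat P0 A0)" and Msym: "transpose M = M"
    and bnd: "\<forall>u. u \<bullet> ((2 *\<^sub>R M + Omega_mat H K B) *v u) \<ge> m0 * (u \<bullet> u)"
  shows "psd_mat ((1/2) *\<^sub>R Q_mat P0 A0 B K H M - Sigma0 K ((1/2) *\<^sub>R M) - SigmaR K ((m0/2) *\<^sub>R mat 1))"
proof -
  have S0s: "transpose (S0_mat P0 A0) = S0_mat P0 A0" using S0 by (simp add: psd_mat_def)
  have Os: "transpose (Omega_mat H K B) = Omega_mat H K B" by (rule Omega_sym[OF H])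
  define G where "G = (1/2) *\<^sub>R Q_mat P0 A0 B K H M - Sigma0 K ((1/2) *\<^sub>R M) - SigmaR K ((m0/2) *\<^sub>R mat 1)"
  have sym: "transpose G = G"
    unfolding G_def Q_mat_def Sigma0_def SigmaR_def block_scale block_diff block_transpose
    by (simp add: transpose_add transpose_diff transpose_uminus transpose_zero transpose_scalar
        matrix_transpose_mul matrix_mul_assoc S0s Os Msym)
  have form: "z \<bullet> (G *v z) \<ge> 0" for z
  proof -
    define x where "x = (\<chi> j. z $ Inl j)"
    define d where "d = (\<chi> j. z $ Inr j)"
    have z: "z = block_vec x d" unfolding x_def d_def by (rule block_surj)
    define y where "y = K *v x"
    have e: "z \<bullet> (G *v z) = 1/2 * (x \<bullet> (S0_mat P0 A0 *v x)) + 1/2 * ((y - d) \<bullet> ((2 *\<^sub>R M + Omega_mat H K B) *v (y - d)))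
              - m0/2 * ((y - d) \<bullet> (y - d))"
      unfolding z G_def Q_mat_def Sigma0_def SigmaR_def block_scale block_diff block_form y_def
      using inner_tr[of d M "K *v x"] inner_commute[of d "K *v x"]
      by (simp add: mvs inner_tr Om_form[OF H] Msym algebra_simps del: transpose_matrix_vector)
    have "x \<bullet> (S0_mat P0 A0 *v x) \<ge> 0" using S0 by (simp add: psd_mat_def)
    moreover have "(y - d) \<bullet> ((2 *\<^sub>R M + Omega_mat H K B) *v (y - d)) \<ge> m0 * ((y - d) \<bullet> (y - d))"
      using bnd by blast
    ultimately show ?thesis unfolding e by simp
  qed
  show ?thesis using sym form unfolding G_def[symmetric] psd_mat_def by blast
qed

theorem lemma4:
  fixes A0 P0 :: "real^'n^'n" and B :: "real^'m^'n" and K :: "real^'n^'m"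
    and H M :: "real^'m^'m" and ub lb :: "real^'m"
  assumes ub_pos: "\<forall>i. ub $ i > 0" and lb_pos: "\<forall>i. lb $ i > 0"
    and P0_sym: "transpose P0 = P0"
    and H_diag: "diag_mat H"
    and M_diag: "diag_mat M" and M_psd: "psd_mat M"
    and eq: "P0 ** B - transpose A0 ** transpose K ** H = transpose K ** M"
    and pd: "pd_mat (2 *\<^sub>R M + Omega_mat H K B)"
  defines "V \<equiv> (\<lambda>x. 1/2 * (x \<bullet> (P0 *v x) + (K *v x) \<bullet> (H *v (K *v x))
                 - dz ub lb (K *v x) \<bullet> (H *v dz ub lb (K *v x))))"
    and "f \<equiv> (\<lambda>x. A0 *v x - B *v sat ub lb (K *v x))"
  shows "(AE x in lborel.
            ((\<lambda>t. V (x + t *\<^sub>R f x)) has_real_derivative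
               (- 1/2 * (block_vec x (dz ub lb (K *v x))
                         \<bullet> (Q_mat P0 A0 B K H M *v block_vec x (dz ub lb (K *v x)))))) (at 0))
       \<and> (psd_mat P0 \<and> psd_mat (S0_mat P0 A0) \<longrightarrow>
           (\<exists>T0 R. diag_mat T0 \<and> psd_mat T0 \<and> pd_mat R
              \<and> psd_mat ((1/2) *\<^sub>R Q_mat P0 A0 B K H M - Sigma0 K T0 - SigmaR K R)
              \<and> (AE x in lborel. \<exists>D. ((\<lambda>t. V (x + t *\<^sub>R f x)) has_real_derivative D) (at 0)
                     \<and> - D \<ge> lambda_min R * (norm (sat ub lb (K *v x)))\<^sup>2)))"
  proof -
  have Msym: "transpose M = M" using M_psd by (simp add: psd_mat_def)
  have D: "((\<lambda>t. V (x + t *\<^sub>R f x)) has_real_derivative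
      (x \<bullet> (P0 *v f x) + sat ub lb (K *v x) \<bullet> (H *v (K *v f x)))) (at 0)" for x
    unfolding V_def using V_deriv[OF H_diag P0_sym ub_pos lb_pos, where x=x and v="f x" and K=K] by simp
  have v3: "x \<bullet> (P0 *v f x) + sat ub lb (K *v x) \<bullet> (H *v (K *v f x))
     = x \<bullet> (P0 *v (A0 *v x)) - (K *v x) \<bullet> (M *v sat ub lb (K *v x))
       - sat ub lb (K *v x) \<bullet> (H *v (K *v (B *v sat ub lb (K *v x))))" for x
    unfolding f_def by (rule L3[OF H_diag eq])
  have ks: "K *v x - dz ub lb (K *v x) = sat ub lb (K *v x)" for x by (simp add: dz_def)
  have v4: "x \<bullet> (P0 *v f x) + sat ub lb (K *v x) \<bullet> (H *v (K *v f x))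
     = - 1/2 * (block_vec x (dz ub lb (K *v x)) \<bullet> (Q_mat P0 A0 B K H M *v block_vec x (dz ub lb (K *v x))))" for x
    unfolding v3 using L4[OF H_diag P0_sym Msym, where x=x and Az=A0 and K=K and B=B and d="dz ub lb (K *v x)"] unfolding ks by simp
  have part1: "AE x in lborel.
            ((\<lambda>t. V (x + t *\<^sub>R f x)) has_real_derivative
               (- 1/2 * (block_vec x (dz ub lb (K *v x))
                         \<bullet> (Q_mat P0 A0 B K H M *v block_vec x (dz ub lb (K *v x)))))) (at 0)"
    using D v4 by (intro AE_I2) metis
  have part2: "\<exists>T0 R. diag_mat T0 \<and> psd_mat T0 \<and> pd_mat R
              \<and> psd_mat ((1/2) *\<^sub>R Q_mat P0 A0 B K H M - Sigma0 K T0 - SigmaR K R)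
              \<and> (AE x in lborel. \<exists>D. ((\<lambda>t. V (x + t *\<^sub>R f x)) has_real_derivative D) (at 0)
                     \<and> - D \<ge> lambda_min R * (norm (sat ub lb (K *v x)))\<^sup>2)"
    if S0: "psd_mat (S0_mat P0 A0)"
  proof -
    obtain m0 where m0: "m0 > 0" and bnd: "\<forall>u. u \<bullet> ((2 *\<^sub>R M + Omega_mat H K B) *v u) \<ge> m0 * (u \<bullet> u)"
      using pd_bound[OF pd] by blast
    define R where "R = (m0/2) *\<^sub>R (mat 1 :: real^'m^'m)"
    have T0d: "diag_mat ((1/2) *\<^sub>R M)" using M_diag by (simp add: diag_mat_def)
    have T0p: "psd_mat ((1/2) *\<^sub>R M)" using M_psd
      by (simp add: psd_mat_def transpose_scalar scaleR_mv)
    have Rp: "pd_mat R" using m0 unfolding R_def pd_mat_def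
      by (simp add: transpose_scalar scaleR_mv)
    have lmin: "lambda_min R = m0/2"
    proof -
      have "{l. \<exists>v. v \<noteq> 0 \<and> R *v v = l *\<^sub>R v} = {m0/2}"
      proof (intro set_eqI iffI)
        fix l assume "l \<in> {l. \<exists>v. v \<noteq> 0 \<and> R *v v = l *\<^sub>R v}"
        then obtain v :: "real^'m" where "v \<noteq> 0" "(m0/2) *\<^sub>R v = l *\<^sub>R v"
          by (auto simp: R_def scaleR_mv)
        thus "l \<in> {m0/2}" by (metis scaleR_cancel_right singletonI)
      next
        fix l assume "l \<in> {m0/2}"
        moreover have "axis undefined (1::real) \<noteq> (0::real^'m)"
          by (metis norm_axis_1 norm_zero zero_neq_one)
        ultimately show "l \<in> {l. \<exists>v. v \<noteq> 0 \<and> R *v v = l *\<^sub>R v}"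
          by (auto simp: R_def scaleR_mv)
      qed
      thus ?thesis unfolding lambda_min_def by simp
    qed
    have Gp: "psd_mat ((1/2) *\<^sub>R Q_mat P0 A0 B K H M - Sigma0 K ((1/2) *\<^sub>R M) - SigmaR K R)"
      unfolding R_def by (rule G_psd[OF H_diag S0 Msym bnd])
    have S0f: "x \<bullet> (S0_mat P0 A0 *v x) = - 2 * (x \<bullet> (P0 *v (A0 *v x)))" for x
    proof -
      have "x \<bullet> (transpose A0 *v (P0 *v x)) = (A0 *v x) \<bullet> (P0 *v x)" by (simp only: inner_tr)
      also have "\<dots> = x \<bullet> (P0 *v (A0 *v x))"
        using inner_tr[of x P0 "A0 *v x"] P0_sym by (simp add: inner_commute)
      finally show ?thesis unfolding S0_mat_def
        by (simp add: mvs del: transpose_matrix_vector)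
    qed
    have bound: "- (x \<bullet> (P0 *v f x) + sat ub lb (K *v x) \<bullet> (H *v (K *v f x)))
        \<ge> lambda_min R * (norm (sat ub lb (K *v x)))\<^sup>2" for x
    proof -
      define s where "s = sat ub lb (K *v x)"
      define d where "d = dz ub lb (K *v x)"
      have y: "K *v x = s + d" unfolding s_def d_def dz_def by simp
      have sig: "x \<bullet> (S0_mat P0 A0 *v x) \<ge> 0" using S0 by (simp add: psd_mat_def)
      have dm: "d \<bullet> (M *v s) \<ge> 0" unfolding d_def s_def
        by (rule dz_sat_nonneg[OF M_diag M_psd ub_pos lb_pos])
      have sw: "s \<bullet> ((2 *\<^sub>R M + Omega_mat H K B) *v s) = 2 * (s \<bullet> (M *v s)) + 2 * (s \<bullet> (H *v (K *v (B *v s))))"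
        by (simp add: matrix_vector_mult_add_rdistrib inner_add_right scaleR_mv Om_form[OF H_diag])
      have sb: "s \<bullet> ((2 *\<^sub>R M + Omega_mat H K B) *v s) \<ge> m0 * (s \<bullet> s)" using bnd by blast
      have ns: "(norm s)^2 = s \<bullet> s" by (simp add: power2_norm_eq_inner)
      have "- (x \<bullet> (P0 *v f x) + sat ub lb (K *v x) \<bullet> (H *v (K *v f x)))
          = 1/2 * (x \<bullet> (S0_mat P0 A0 *v x)) + d \<bullet> (M *v s) + 1/2 * (s \<bullet> ((2 *\<^sub>R M + Omega_mat H K B) *v s))"
      proof -
        have "- (x \<bullet> (P0 *v f x) + sat ub lb (K *v x) \<bullet> (H *v (K *v f x)))
          = - (x \<bullet> (P0 *v (A0 *v x)) - (K *v x) \<bullet> (M *v s) - s \<bullet> (H *v (K *v (B *v s))))"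
          unfolding v3 s_def by simp
        also have "\<dots> = 1/2 * (x \<bullet> (S0_mat P0 A0 *v x)) + d \<bullet> (M *v s) + 1/2 * (s \<bullet> ((2 *\<^sub>R M + Omega_mat H K B) *v s))"
          unfolding S0f sw y by (simp add: inner_add_left algebra_simps)
        finally show ?thesis .
      qed
      thus ?thesis unfolding lmin ns s_def[symmetric] using sig dm sb by simp
    qed
    show ?thesis
      apply (rule exI[of _ "(1/2) *\<^sub>R M"], rule exI[of _ R])
      using T0d T0p Rp Gp apply simp
      apply (rule AE_I2)
      using D bound by blast
  qed
  show ?thesis using part1 part2 by blast
qed

end
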